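(* Consider a channel network whose links are divided into computational cells. For a cell $k$ of length $\Delta x_k>0$ with interior interfaces $x_{k-1/2}$ (left) and $x_{k+1/2}$ (right), let $\bar A_k^n\ge 0$ be the cell-averaged wetted area at time level $n$. At each interface $x_{j+1/2}$ let there be given reconstructed one-sided areas $A^{\pm}_{j+1/2}\ge 0$, velocities $u^{\pm}_{j+1/2}\in\mathbb R$, celerities $c^{\pm}_{j+1/2}\ge 0$, discharges $Q^{\pm}_{j+1/2}=A^{\pm}_{j+1/2}u^{\pm}_{j+1/2}$, and one-sided speeds $$a^+_{j+1/2}=\max\{0,\,u^+_{j+1/2}+c^+_{j+1/2},\,u^-_{j+1/2}+c^-_{j+1/2}\},\qquad a^-_{j+1/2}=\min\{0,\,u^+_{j+1/2}-c^+_{j+1/2},\,u^-_{j+1/2}-c^-_{j+1/2}\},$$ and assume $a^+_{j+1/2}-a^-_{j+1/2}>0$. Define the mass flux $$H^{(1)}_{j+1/2}=\frac{a^+_{j+1/2}Q^-_{j+1/2}-a^-_{j+1/2}Q^+_{j+1/2}}{a^+_{j+1/2}-a^-_{j+1/2}}+\frac{a^+_{j+1/2}a^-_{j+1/2}}{a^+_{j+1/2}-a^-_{j+1/2}}\big(A^+_{j+1/2}-A^-_{j+1/2}\big).$$ (i) (Interior cells.) Let $\bar A_k^{n+1}=\bar A_k^n-\frac{\Delta t}{\Delta x_k}\big(H^{(1)}_{k+1/2}-H^{(1)}_{k-1/2}\big)$. If $\Delta t>0$ satisfies $$\Delta t\le \Delta t_k:=\min\Big\{\frac{\Delta x_k}{a^+_{k-1/2}-a^-_{k+1/2}},\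 \frac{\Delta x_k\,\bar A_k^n}{a^+_{k+1/2}A^-_{k+1/2}-a^-_{k-1/2}A^+_{k-1/2}}\Big\}$$ (where a quotient with nonpositive denominator is interpreted as $+\infty$), then $\bar A_k^{n+1}\ge 0$. (ii) (Junction nodes.) Let a node $s$ have a set $J_{s,in}$ of inflowing links, each $i$ ending at the node with last interface $x_{i,n_i+1/2}$, and a set $J_{s,out}$ of outflowing links, each $j$ starting at the node with first interface $x_{j,1/2}$. Let the node control volume consist of pieces of lengths $\Delta x^{in}_{s,i}>0$, $\Delta x^{out}_{s,j}>0$ with average areas $\bar A^{in,n}_{s,i}\ge0$, $\bar A^{out,n}_{s,j}\ge0$, and define the total volumes $V^n_s=\sum_{i\in J_{s,in}}\Delta x^{in}_{s,i}\bar A^{in,n}_{s,i}+\sum_{j\in J_{s,out}}\Delta x^{out}_{s,j}\bar A^{out,n}_{s,j}$ and $$V_s^{n+1}=V_s^n+\Delta t\sum_{i\in J_{s,in}}H^{(1)}_{i,n_i+1/2}-\Delta t\sum_{j\in J_{s,out}}H^{(1)}_{j,1/2}.$$ If $$\Delta t\le\Delta t_s:=\min\Big\{\min_{i\in J_{s,in}}\Big[\frac{\Delta x^{in}_{s,i}}{a^+_{i,n_i+1/2}},\ \frac{-\Delta x^{in}_{s,i}\bar A^{in,n}_{s,i}}{a^-_{i,n_i+1/2}A^+_{i,n_i+1/2}}\Big],\ \min_{j\in J_{s,out}}\Big[\frac{-\Delta x^{out}_{s,j}}{a^-_{j,1/2}},\ \frac{\Delta x^{out}_{s,j}\bar A^{out,n}_{s,j}}{a^+_{j,1/2}A^-_{j,1/2}}\Big]\Big\}$$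 (with quotients having zero denominator interpreted as $+\infty$), then $V_s^{n+1}\ge 0$. Consequently, if $\Delta t\le\min\{\min_{k}\Delta t_k,\min_s\Delta t_s\}$, all updated cell areas and node volumes are nonnegative.
   Context: This is the mass-conservation part of a first-order-in-time (forward Euler) central-upwind finite-volume scheme for the one-dimensional Saint Venant equations $A_t+Q_x=0$, $Q_t+(Q^2/A+gI_1)_x=\dots$ on a channel network, where $A$ is the wetted cross-sectional area, $Q=Au$ the discharge, and $c=\sqrt{gA/\sigma_T}$ the celerity ($\sigma_T$ the free-surface width). The momentum update (with implicit treatment of friction) does not affect the area update. *)

theory Defs
  imports "HOL-Analysis.Analysis" "HOL-Library.Extended_Real"
begin

text \<open>Reconstructed data at one interface x_{j+1/2}:
  one-sided areas A^+ (Ap), A^- (Am), velocities u^+ (up), u^- (um),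
  celerities c^+ (cp), c^- (cm).  Discharges are Q^pm = A^pm u^pm.\<close>
record iface =
  Ap :: real
  Am :: real
  up :: real
  um :: real
  cp :: real
  cm :: real

definition Qp :: "iface \<Rightarrow> real" where "Qp I = Ap I * up I"
definition Qm :: "iface \<Rightarrow> real" where "Qm I = Am I * um I"

definition aplus :: "iface \<Rightarrow> real" where
  "aplus I = max 0 (max (up I + cp I) (um I + cm I))"

definition aminus :: "iface \<Rightarrow> real" where
  "aminus I = min 0 (min (up I - cp I) (um I - cm I))"

definition H1 :: "iface \<Rightarrow> real" where
  "H1 I = (aplus I * Qm I - aminus I * Qp I) / (aplus I - aminus I)
        + (aplus I * aminus I) / (aplus I - aminus I) * (Ap I - Am I)"

definition valid_iface :: "iface \<Rightarrow> bool" where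
  "valid_iface I \<longleftrightarrow> Ap I \<ge> 0 \<and> Am I \<ge> 0 \<and> cp I \<ge> 0 \<and> cm I \<ge> 0
                     \<and> aplus I - aminus I > 0"

definition quot_pos :: "real \<Rightarrow> real \<Rightarrow> ereal" where
  "quot_pos x d = (if d \<le> 0 then \<infinity> else ereal (x / d))"

definition quot_nz :: "real \<Rightarrow> real \<Rightarrow> ereal" where
  "quot_nz x d = (if d = 0 then \<infinity> else ereal (x / d))"

text \<open>Interior cell of length dx, average area A, left interface IL = x_{k-1/2},
  right interface IR = x_{k+1/2}.\<close>
definition dt_cell :: "real \<Rightarrow> real \<Rightarrow> iface \<Rightarrow> iface \<Rightarrow> ereal" where
  "dt_cell dx A IL IR =
     min (quot_pos dx (aplus IL - aminus IR))
         (quot_pos (dx * A) (aplus IR * Am IR - aminus IL * Ap IL))"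

definition cell_update :: "real \<Rightarrow> real \<Rightarrow> real \<Rightarrow> iface \<Rightarrow> iface \<Rightarrow> real" where
  "cell_update dt dx A IL IR = A - dt / dx * (H1 IR - H1 IL)"

text \<open>Junction node: Jin inflowing links (Iin i = last interface x_{i,n_i+1/2} of link i,
  piece length dxin i, average area Ain i), Jout outflowing links (Iout j = first
  interface x_{j,1/2}, piece length dxout j, average area Aout j).\<close>
definition dt_node :: "'l set \<Rightarrow> ('l \<Rightarrow> real) \<Rightarrow> ('l \<Rightarrow> real) \<Rightarrow> ('l \<Rightarrow> iface)
     \<Rightarrow> 'l set \<Rightarrow> ('l \<Rightarrow> real) \<Rightarrow> ('l \<Rightarrow> real) \<Rightarrow> ('l \<Rightarrow> iface) \<Rightarrow> ereal" where
  "dt_node Jin dxin Ain Iin Jout dxout Aout Iout =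
     min (INF i\<in>Jin. min (quot_nz (dxin i) (aplus (Iin i)))
                          (quot_nz (- dxin i * Ain i) (aminus (Iin i) * Ap (Iin i))))
         (INF j\<in>Jout. min (quot_nz (- dxout j) (aminus (Iout j)))
                          (quot_nz (dxout j * Aout j) (aplus (Iout j) * Am (Iout j))))"

definition node_volume :: "'l set \<Rightarrow> ('l \<Rightarrow> real) \<Rightarrow> ('l \<Rightarrow> real)
     \<Rightarrow> 'l set \<Rightarrow> ('l \<Rightarrow> real) \<Rightarrow> ('l \<Rightarrow> real) \<Rightarrow> real" where
  "node_volume Jin dxin Ain Jout dxout Aout =
     (\<Sum>i\<in>Jin. dxin i * Ain i) + (\<Sum>j\<in>Jout. dxout j * Aout j)"

definition node_update :: "real \<Rightarrow> 'l set \<Rightarrow> ('l \<Rightarrow> real) \<Rightarrow> ('l \<Rightarrow> real) \<Rightarrow> ('l \<Rightarrow> iface)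
     \<Rightarrow> 'l set \<Rightarrow> ('l \<Rightarrow> real) \<Rightarrow> ('l \<Rightarrow> real) \<Rightarrow> ('l \<Rightarrow> iface) \<Rightarrow> real" where
  "node_update dt Jin dxin Ain Iin Jout dxout Aout Iout =
     node_volume Jin dxin Ain Jout dxout Aout
     + dt * (\<Sum>i\<in>Jin. H1 (Iin i)) - dt * (\<Sum>j\<in>Jout. H1 (Iout j))"

end

theory Submission
  imports Defs
begin


lemma H1_bounds:
  assumes v: "valid_iface I"
  shows "H1 I \<le> aplus I * Am I" "aminus I * Ap I \<le> H1 I"
proof -
  let ?p = "aplus I" and ?m = "aminus I"
  have d: "?p - ?m > 0" and A1: "Ap I \<ge> 0" and A2: "Am I \<ge> 0" and c1: "cp I \<ge> 0" and c2: "cm I \<ge> 0"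
    using v by (auto simp: valid_iface_def)
  have p0: "?p \<ge> 0" "um I \<le> ?p" "up I \<le> ?p" using c1 c2 by (auto simp: aplus_def)
  have m0: "?m \<le> 0" "?m \<le> um I" "?m \<le> up I" using c1 c2 by (auto simp: aminus_def)
  have eq: "H1 I = (?p * Am I * (um I - ?m) - ?m * Ap I * (up I - ?p)) / (?p - ?m)"
  proof -
    have "H1 I = (?p * Qm I - ?m * Qp I + ?p * ?m * (Ap I - Am I)) / (?p - ?m)"
      unfolding H1_def by (simp add: add_divide_distrib)
    also have "?p * Qm I - ?m * Qp I + ?p * ?m * (Ap I - Am I) = ?p * Am I * (um I - ?m) - ?m * Ap I * (up I - ?p)"
      by (simp add: Qp_def Qm_def algebra_simps)
    finally show ?thesis .
  qed
  have n1: "?p * Am I * (um I - ?m) - ?m * Ap I * (up I - ?p) \<le> ?p * Am I * (?p - ?m)"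
  proof -
    have "?p * Am I * (um I - ?m) \<le> ?p * Am I * (?p - ?m)"
      by (rule mult_left_mono) (use p0 A2 in auto)
    moreover have "- ?m * Ap I * (up I - ?p) \<le> 0"
    proof -
      have "?m * Ap I \<le> 0" using m0(1) A1 by (rule mult_nonpos_nonneg)
      moreover have "up I - ?p \<le> 0" using p0 by simp
      ultimately have "0 \<le> ?m * Ap I * (up I - ?p)" by (rule mult_nonpos_nonpos)
      then show ?thesis by simp
    qed
    ultimately show ?thesis by linarith
  qed
  have n2: "?m * Ap I * (?p - ?m) \<le> ?p * Am I * (um I - ?m) - ?m * Ap I * (up I - ?p)"
  proof -
    have "0 \<le> ?p * Am I * (um I - ?m)" using p0 A2 m0 by simp
    moreover have "(- ?m) * Ap I * (?m - ?p) \<le> (- ?m) * Ap I * (up I - ?p)"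
      by (rule mult_left_mono) (use m0 A1 mult_nonpos_nonneg[of "?m" "Ap I"] in auto)
    ultimately show ?thesis by (simp add: algebra_simps)
  qed
  show "H1 I \<le> ?p * Am I" unfolding eq using n1 d by (simp add: divide_le_eq)
  show "?m * Ap I \<le> H1 I" unfolding eq using n2 d by (simp add: le_divide_eq)
qed

lemma cell_ok:
  assumes "dt > 0" "dx > 0" "A \<ge> 0" "valid_iface IL" "valid_iface IR"
    and le: "ereal dt \<le> dt_cell dx A IL IR"
  shows "cell_update dt dx A IL IR \<ge> 0"
proof -
  let ?D = "aplus IR * Am IR - aminus IL * Ap IL"
  have h: "H1 IR - H1 IL \<le> ?D" using H1_bounds[OF assms(4)] H1_bounds[OF assms(5)] by linarith
  have q: "ereal dt \<le> quot_pos (dx * A) ?D" using le unfolding dt_cell_def by simp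
  have "dt * (H1 IR - H1 IL) \<le> dx * A"
  proof (cases "?D \<le> 0")
    case True
    then have "dt * (H1 IR - H1 IL) \<le> 0" using h assms(1) by (simp add: mult_nonneg_nonpos)
    then show ?thesis using assms by (simp add: order_trans[of _ 0])
  next
    case False
    then have "dt \<le> dx * A / ?D" using q by (simp add: quot_pos_def)
    then have "dt * ?D \<le> dx * A" using False by (simp add: le_divide_eq)
    moreover have "dt * (H1 IR - H1 IL) \<le> dt * ?D" using h assms(1) by simp
    ultimately show ?thesis by linarith
  qed
  then have "dt / dx * (H1 IR - H1 IL) \<le> A" using assms(2)
    by (simp add: divide_le_eq mult.commute mult.left_commute)
  then show ?thesis unfolding cell_update_def by simp
qed

lemma node_ok:
  assumes dt: "dt > 0" and fin: "finite Jin" "finite Jout"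
    and inl: "\<And>i. i \<in> Jin \<Longrightarrow> dxin i > 0 \<and> Ain i \<ge> 0 \<and> valid_iface (Iin i)"
    and outl: "\<And>j. j \<in> Jout \<Longrightarrow> dxout j > 0 \<and> Aout j \<ge> 0 \<and> valid_iface (Iout j)"
    and le: "ereal dt \<le> dt_node Jin dxin Ain Iin Jout dxout Aout Iout"
  shows "node_update dt Jin dxin Ain Iin Jout dxout Aout Iout \<ge> 0"
proof -
  have a: "dxin i * Ain i + dt * H1 (Iin i) \<ge> 0" if i: "i \<in> Jin" for i
  proof -
    have "ereal dt \<le> quot_nz (- dxin i * Ain i) (aminus (Iin i) * Ap (Iin i))"
    proof -
      have "dt_node Jin dxin Ain Iin Jout dxout Aout Iout \<le> (INF i\<in>Jin. min (quot_nz (dxin i) (aplus (Iin i)))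
                          (quot_nz (- dxin i * Ain i) (aminus (Iin i) * Ap (Iin i))))"
        unfolding dt_node_def by simp
      also have "\<dots> \<le> min (quot_nz (dxin i) (aplus (Iin i)))
                          (quot_nz (- dxin i * Ain i) (aminus (Iin i) * Ap (Iin i)))"
        by (rule INF_lower[OF i])
      finally show ?thesis using le by (meson order_trans min.boundedE)
    qed
    moreover have v: "valid_iface (Iin i)" and d: "dxin i > 0" "Ain i \<ge> 0" using inl[OF i] by auto
    have b: "aminus (Iin i) * Ap (Iin i) \<le> H1 (Iin i)" using H1_bounds[OF v] by simp
    have np: "aminus (Iin i) * Ap (Iin i) \<le> 0"
      using v by (auto simp: valid_iface_def aminus_def intro!: mult_nonpos_nonneg)
    let ?E = "aminus (Iin i) * Ap (Iin i)"
    have "dxin i * Ain i + dt * ?E \<ge> 0"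
    proof (cases "?E = 0")
      case True then show ?thesis using d by (simp only: True) simp
    next
      case False
      have E: "?E < 0" using np False by linarith
      from calculation False have "dt \<le> (- dxin i * Ain i) / ?E" by (simp add: quot_nz_def)
      then have "(- dxin i * Ain i) / ?E * ?E \<le> dt * ?E" using E by (intro mult_right_mono_neg) auto
      moreover have "(- dxin i * Ain i) / ?E * ?E = - dxin i * Ain i" using E by (metis (no_types) less_irrefl nonzero_eq_divide_eq mult.commute)
      ultimately have "dt * ?E \<ge> - dxin i * Ain i" by linarith
      then show ?thesis by linarith
    qed
    moreover have "dt * ?E \<le> dt * H1 (Iin i)" using b dt by simp
    ultimately show ?thesis by linarith
  qed
  have b: "dxout j * Aout j - dt * H1 (Iout j) \<ge> 0" if j: "j \<in> Jout" for j
  proof -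
    have "ereal dt \<le> quot_nz (dxout j * Aout j) (aplus (Iout j) * Am (Iout j))"
    proof -
      have "dt_node Jin dxin Ain Iin Jout dxout Aout Iout \<le> (INF j\<in>Jout. min (quot_nz (- dxout j) (aminus (Iout j)))
                          (quot_nz (dxout j * Aout j) (aplus (Iout j) * Am (Iout j))))"
        unfolding dt_node_def by simp
      also have "\<dots> \<le> min (quot_nz (- dxout j) (aminus (Iout j)))
                          (quot_nz (dxout j * Aout j) (aplus (Iout j) * Am (Iout j)))"
        by (rule INF_lower[OF j])
      finally show ?thesis using le by (meson order_trans min.boundedE)
    qed
    moreover have v: "valid_iface (Iout j)" and d: "dxout j > 0" "Aout j \<ge> 0" using outl[OF j] by auto
    have b: "H1 (Iout j) \<le> aplus (Iout j) * Am (Iout j)" using H1_bounds[OF v] by simp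
    have np: "aplus (Iout j) * Am (Iout j) \<ge> 0"
      using v by (auto simp: valid_iface_def aplus_def)
    let ?E = "aplus (Iout j) * Am (Iout j)"
    have "dxout j * Aout j - dt * ?E \<ge> 0"
    proof (cases "?E = 0")
      case True then show ?thesis using d by (simp only: True) simp
    next
      case False
      have E: "?E > 0" using np False by linarith
      from calculation False have "dt \<le> (dxout j * Aout j) / ?E" by (simp add: quot_nz_def)
      then have "dt * ?E \<le> dxout j * Aout j" using E by (simp add: le_divide_eq)
      then show ?thesis by linarith
    qed
    moreover have "dt * H1 (Iout j) \<le> dt * ?E" using b dt by simp
    ultimately show ?thesis by linarith
  qed
  have "node_update dt Jin dxin Ain Iin Jout dxout Aout Iout =
        (\<Sum>i\<in>Jin. dxin i * Ain i + dt * H1 (Iin i)) + (\<Sum>j\<in>Jout. dxout j * Aout j - dt * H1 (Iout j))"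
    unfolding node_update_def node_volume_def
    by (simp add: sum.distrib sum_subtractf sum_distrib_left)
  also have "\<dots> \<ge> 0" by (rule add_nonneg_nonneg; rule sum_nonneg) (use a b in auto)
  finally show ?thesis .
qed

theorem theorem1:
  fixes K :: "'k set" and dx A :: "'k \<Rightarrow> real" and IL IR :: "'k \<Rightarrow> iface"
    and S :: "'n set" and Jin Jout :: "'n \<Rightarrow> 'l set"
    and dxin Ain dxout Aout :: "'n \<Rightarrow> 'l \<Rightarrow> real" and Iin Iout :: "'n \<Rightarrow> 'l \<Rightarrow> iface"
    and dt :: real
  assumes dt_pos: "dt > 0"
    and finK: "finite K" and finS: "finite S"
    and cells: "\<And>k. k \<in> K \<Longrightarrow> dx k > 0 \<and> A k \<ge> 0 \<and> valid_iface (IL k) \<and> valid_iface (IR k)"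
    and fin_links: "\<And>s. s \<in> S \<Longrightarrow> finite (Jin s) \<and> finite (Jout s)"
    and inlinks: "\<And>s i. s \<in> S \<Longrightarrow> i \<in> Jin s \<Longrightarrow>
                    dxin s i > 0 \<and> Ain s i \<ge> 0 \<and> valid_iface (Iin s i)"
    and outlinks: "\<And>s j. s \<in> S \<Longrightarrow> j \<in> Jout s \<Longrightarrow>
                    dxout s j > 0 \<and> Aout s j \<ge> 0 \<and> valid_iface (Iout s j)"
  shows "(\<forall>k\<in>K. ereal dt \<le> dt_cell (dx k) (A k) (IL k) (IR k)
                \<longrightarrow> cell_update dt (dx k) (A k) (IL k) (IR k) \<ge> 0)
       \<and> (\<forall>s\<in>S. ereal dt \<le> dt_node (Jin s) (dxin s) (Ain s) (Iin s) (Jout s) (dxout s) (Aout s) (Iout s)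
                \<longrightarrow> node_update dt (Jin s) (dxin s) (Ain s) (Iin s) (Jout s) (dxout s) (Aout s) (Iout s) \<ge> 0)
       \<and> (ereal dt \<le> min (INF k\<in>K. dt_cell (dx k) (A k) (IL k) (IR k))
                         (INF s\<in>S. dt_node (Jin s) (dxin s) (Ain s) (Iin s) (Jout s) (dxout s) (Aout s) (Iout s))
          \<longrightarrow> (\<forall>k\<in>K. cell_update dt (dx k) (A k) (IL k) (IR k) \<ge> 0)
            \<and> (\<forall>s\<in>S. node_update dt (Jin s) (dxin s) (Ain s) (Iin s) (Jout s) (dxout s) (Aout s) (Iout s) \<ge> 0))"
proof -
  have P1: "\<forall>k\<in>K. ereal dt \<le> dt_cell (dx k) (A k) (IL k) (IR k)
                \<longrightarrow> cell_update dt (dx k) (A k) (IL k) (IR k) \<ge> 0"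
    using cells dt_pos by (auto intro: cell_ok)
  have P2: "\<forall>s\<in>S. ereal dt \<le> dt_node (Jin s) (dxin s) (Ain s) (Iin s) (Jout s) (dxout s) (Aout s) (Iout s)
                \<longrightarrow> node_update dt (Jin s) (dxin s) (Ain s) (Iin s) (Jout s) (dxout s) (Aout s) (Iout s) \<ge> 0"
  proof (intro ballI impI)
    fix s assume s: "s \<in> S" and l: "ereal dt \<le> dt_node (Jin s) (dxin s) (Ain s) (Iin s) (Jout s) (dxout s) (Aout s) (Iout s)"
    show "node_update dt (Jin s) (dxin s) (Ain s) (Iin s) (Jout s) (dxout s) (Aout s) (Iout s) \<ge> 0"
      by (rule node_ok[OF dt_pos _ _ _ _ l]) (use fin_links[OF s] inlinks[OF s] outlinks[OF s] in auto)
  qed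
  have P3: "ereal dt \<le> min (INF k\<in>K. dt_cell (dx k) (A k) (IL k) (IR k))
                         (INF s\<in>S. dt_node (Jin s) (dxin s) (Ain s) (Iin s) (Jout s) (dxout s) (Aout s) (Iout s))
          \<longrightarrow> (\<forall>k\<in>K. cell_update dt (dx k) (A k) (IL k) (IR k) \<ge> 0)
            \<and> (\<forall>s\<in>S. node_update dt (Jin s) (dxin s) (Ain s) (Iin s) (Jout s) (dxout s) (Aout s) (Iout s) \<ge> 0)"
  proof (intro impI conjI ballI)
    assume m: "ereal dt \<le> min (INF k\<in>K. dt_cell (dx k) (A k) (IL k) (IR k))
                         (INF s\<in>S. dt_node (Jin s) (dxin s) (Ain s) (Iin s) (Jout s) (dxout s) (Aout s) (Iout s))"
    fix k assume k: "k \<in> K"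
    have "(INF k\<in>K. dt_cell (dx k) (A k) (IL k) (IR k)) \<le> dt_cell (dx k) (A k) (IL k) (IR k)"
      by (rule INF_lower[OF k])
    then show "cell_update dt (dx k) (A k) (IL k) (IR k) \<ge> 0" using P1 k m
      by (meson min.boundedE order_trans)
  next
    assume m: "ereal dt \<le> min (INF k\<in>K. dt_cell (dx k) (A k) (IL k) (IR k))
                         (INF s\<in>S. dt_node (Jin s) (dxin s) (Ain s) (Iin s) (Jout s) (dxout s) (Aout s) (Iout s))"
    fix s assume s: "s \<in> S"
    have "(INF s\<in>S. dt_node (Jin s) (dxin s) (Ain s) (Iin s) (Jout s) (dxout s) (Aout s) (Iout s))
          \<le> dt_node (Jin s) (dxin s) (Ain s) (Iin s) (Jout s) (dxout s) (Aout s) (Iout s)"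
      by (rule INF_lower[OF s])
    then show "node_update dt (Jin s) (dxin s) (Ain s) (Iin s) (Jout s) (dxout s) (Aout s) (Iout s) \<ge> 0"
      using P2 s m by (meson min.boundedE order_trans)
  qed
  show ?thesis using P1 P2 P3 by blast
qed

end
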